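(* Let $A\subset\mathbb{R}^3$ be a $2+1$-complex. Then $A\subset [Extr(A)]^{rc}$.
   Context: A horizontal segment/line is one contained in a plane $\{z=c\}$; a vertical segment/line is one parallel to the $z$ axis. A $2+1$-complex is a closed subset of $\mathbb{R}^3$ that is the union of a finite list $L$ of elements, each of one of the following kinds: points; relatively open horizontal segments whose two endpoints belong to $L$; relatively open vertical segments whose two endpoints belong to $L$; relatively open triangles in a horizontal plane whose three boundary segments belong to $L$; relatively open rectangles in a vertical plane, two of whose sides are parallel to the $z$ axis, whose four boundary segments belong to $L$; open subsets of $\mathbb{R}^3$ whose boundary is a union of elements of the previous kinds, all belonging to $L$. A point $p\in A$ is extremal if no relatively open horizontal or vertical segment contained in $A$ contains $p$; $Extr(A)$ is the set of extremal points. A function $f:\mathbb{R}^3\to\mathbb{R}$ is $2+1$-convex if its restriction to every horizontal and every vertical line is convex; for compact $S$, $S^{rc}=\{x: f(x)\le\sup_S f\text{ for every } 2+1\text{-convex } f\}$. *)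

theory Defs
  imports "HOL-Analysis.Analysis"
begin

type_synonym pt3 = "real ^ 3"

definition horiz_pair :: "pt3 \<Rightarrow> pt3 \<Rightarrow> bool" where
  "horiz_pair a b \<longleftrightarrow> a \<noteq> b \<and> a$3 = b$3"

definition vert_pair :: "pt3 \<Rightarrow> pt3 \<Rightarrow> bool" where
  "vert_pair a b \<longleftrightarrow> a \<noteq> b \<and> a$1 = b$1 \<and> a$2 = b$2"

definition ez :: pt3 where "ez = axis 3 1"

definition low_element :: "pt3 set set \<Rightarrow> pt3 set \<Rightarrow> bool" where
  "low_element L E \<longleftrightarrow>
     (\<exists>p. E = {p})
   \<or> (\<exists>a b. horiz_pair a b \<and> E = open_segment a b \<and> {a} \<in> L \<and> {b} \<in> L)
   \<or> (\<exists>a b. vert_pair a b \<and> E = open_segment a b \<and> {a} \<in> L \<and> {b} \<in> L)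
   \<or> (\<exists>a b c. a$3 = b$3 \<and> a$3 = c$3 \<and> \<not> collinear {a, b, c}
        \<and> E = rel_interior (convex hull {a, b, c})
        \<and> open_segment a b \<in> L \<and> open_segment b c \<in> L \<and> open_segment a c \<in> L)
   \<or> (\<exists>a b t. horiz_pair a b \<and> t > 0
        \<and> E = rel_interior (convex hull {a, b, a + t *\<^sub>R ez, b + t *\<^sub>R ez})
        \<and> open_segment a b \<in> L
        \<and> open_segment (a + t *\<^sub>R ez) (b + t *\<^sub>R ez) \<in> L
        \<and> open_segment a (a + t *\<^sub>R ez) \<in> L
        \<and> open_segment b (b + t *\<^sub>R ez) \<in> L)"

definition complex_element :: "pt3 set set \<Rightarrow> pt3 set \<Rightarrow> bool" where
  "complex_element L E \<longleftrightarrow> low_element L E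
   \<or> (open E \<and> bounded E \<and>
       (\<exists>S. S \<subseteq> {F \<in> L. low_element L F} \<and> frontier E = \<Union>S))"

definition complex21 :: "pt3 set \<Rightarrow> bool" where
  "complex21 A \<longleftrightarrow> closed A \<and>
     (\<exists>L. finite L \<and> A = \<Union>L \<and> (\<forall>E\<in>L. complex_element L E))"

definition Extr :: "pt3 set \<Rightarrow> pt3 set" where
  "Extr A = {p \<in> A. \<not> (\<exists>a b. (horiz_pair a b \<or> vert_pair a b)
                          \<and> open_segment a b \<subseteq> A \<and> p \<in> open_segment a b)}"

definition convex21 :: "(pt3 \<Rightarrow> real) \<Rightarrow> bool" where
  "convex21 f \<longleftrightarrow> (\<forall>p v. (v$3 = 0 \<or> (v$1 = 0 \<and> v$2 = 0)) \<longrightarrow>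
       convex_on UNIV (\<lambda>t::real. f (p + t *\<^sub>R v)))"

text \<open>x \<in> S^rc iff f x \<le> sup_S f for all 2+1-convex f (sup taken in the extended reals,
  so expressed via upper bounds).\<close>

definition rc_hull :: "pt3 set \<Rightarrow> pt3 set" where
  "rc_hull S = {x. \<forall>f. convex21 f \<longrightarrow> (\<forall>c. (\<forall>y\<in>S. f y \<le> c) \<longrightarrow> f x \<le> c)}"

end

theory Submission
  imports Defs
begin


lemma conv_max:
  fixes \<phi> :: "real \<Rightarrow> real"
  assumes c: "convex_on UNIV \<phi>" and "a \<le> t" "t \<le> b"
  shows "\<phi> t \<le> max (\<phi> a) (\<phi> b)"
proof (cases "a = b")
  case True then show ?thesis using assms by auto
next
  case False
  define l where "l = (t - a) / (b - a)"
  have l0: "0 \<le> l" "l \<le> 1" using assms False by (auto simp: l_def field_simps)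
  have "l * (b - a) = t - a" using False by (simp add: l_def)
  then have t: "t = (1 - l) *\<^sub>R a + l *\<^sub>R b" by (simp add: algebra_simps)
  have "\<phi> t \<le> (1 - l) * \<phi> a + l * \<phi> b" unfolding t by (rule convex_onD[OF c l0]) auto
  also have "\<dots> \<le> (1 - l) * max (\<phi> a) (\<phi> b) + l * max (\<phi> a) (\<phi> b)"
    by (intro add_mono mult_left_mono) (use l0 in auto)
  finally show ?thesis by (simp add: algebra_simps)
qed

lemma conv_lip:
  fixes \<phi> :: "real \<Rightarrow> real"
  assumes c: "convex_on UNIV \<phi>" and U: "\<And>t. \<bar>t\<bar> \<le> 1 \<Longrightarrow> \<phi> t \<le> U" and s: "\<bar>s\<bar> \<le> 1"
  shows "\<bar>\<phi> s - \<phi> 0\<bar> \<le> \<bar>s\<bar> * (U - \<phi> 0)"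
proof -
  define e where "e = (if s \<ge> 0 then 1 else -1::real)"
  have ae: "\<bar>e\<bar> = 1" and se: "s = \<bar>s\<bar> * e" by (auto simp: e_def)
  have up: "\<phi> s \<le> (1 - \<bar>s\<bar>) * \<phi> 0 + \<bar>s\<bar> * \<phi> e"
  proof -
    have "s = (1 - \<bar>s\<bar>) *\<^sub>R 0 + \<bar>s\<bar> *\<^sub>R e" using se by simp
    then have "\<phi> s = \<phi> ((1 - \<bar>s\<bar>) *\<^sub>R 0 + \<bar>s\<bar> *\<^sub>R e)" by simp
    also have "\<dots> \<le> (1 - \<bar>s\<bar>) * \<phi> 0 + \<bar>s\<bar> * \<phi> e"
      by (rule convex_onD[OF c]) (use s in auto)
    finally show ?thesis .
  qed
  have "\<bar>s\<bar> * \<phi> e \<le> \<bar>s\<bar> * U" using U[of e] ae by (intro mult_left_mono) auto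
  with up have A: "\<phi> s - \<phi> 0 \<le> \<bar>s\<bar> * (U - \<phi> 0)" by (simp add: algebra_simps)
  define l where "l = \<bar>s\<bar> / (1 + \<bar>s\<bar>)"
  have l0: "0 \<le> l" "l \<le> 1" by (auto simp: l_def field_simps)
  have z: "(0::real) = (1 - l) *\<^sub>R s + l *\<^sub>R (- e)"
    using se by (simp add: l_def field_simps)
  have "\<phi> 0 = \<phi> ((1 - l) *\<^sub>R s + l *\<^sub>R (- e))" using z by simp
  also have "\<dots> \<le> (1 - l) * \<phi> s + l * \<phi> (- e)" by (rule convex_onD[OF c l0]) auto
  also have "\<dots> \<le> (1 - l) * \<phi> s + l * U" using U[of "-e"] ae l0 by (intro add_mono mult_left_mono) auto
  finally have "\<phi> 0 \<le> (1 - l) * \<phi> s + l * U" .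
  then have "(1 + \<bar>s\<bar>) * \<phi> 0 \<le> (1 + \<bar>s\<bar>) * ((1 - l) * \<phi> s + l * U)"
    by (intro mult_left_mono) auto
  also have "\<dots> = (1 + \<bar>s\<bar>) * (1 - l) * \<phi> s + (1 + \<bar>s\<bar>) * l * U" by (simp add: algebra_simps)
  also have "(1 + \<bar>s\<bar>) * (1 - l) = 1" by (simp add: l_def field_simps)
  also have "(1 + \<bar>s\<bar>) * l = \<bar>s\<bar>" by (simp add: l_def field_simps)
  finally have "(1 + \<bar>s\<bar>) * \<phi> 0 \<le> \<phi> s + \<bar>s\<bar> * U" by simp
  then have B: "\<phi> 0 - \<phi> s \<le> \<bar>s\<bar> * (U - \<phi> 0)" by (simp add: algebra_simps)
  from A B show ?thesis by linarith
qed


definition upd :: "pt3 \<Rightarrow> 3 \<Rightarrow> real \<Rightarrow> pt3" where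
  "upd q i c = (\<chi> j. if j = i then c else q$j)"

lemma upd_nth [simp]: "upd q i c $ j = (if j = i then c else q$j)"
  by (simp add: upd_def)

lemma upd_eq: "upd q i c = q + (c - q$i) *\<^sub>R axis i 1"
  by (simp add: vec_eq_iff axis_def)

lemma coord_conv:
  assumes "convex21 f"
  shows "convex_on UNIV (\<lambda>t. f (q + t *\<^sub>R axis i 1))"
proof -
  have "(axis i (1::real))$3 = 0 \<or> ((axis i (1::real))$1 = 0 \<and> (axis i (1::real))$2 = 0)"
    using exhaust_3[of i] by (auto simp: axis_def)
  then show ?thesis using assms unfolding convex21_def by blast
qed

lemma coord_max:
  assumes "convex21 f" "lo \<le> q$i" "q$i \<le> hi"
  shows "f q \<le> max (f (upd q i lo)) (f (upd q i hi))"
proof -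
  have "(\<lambda>t. f (q + t *\<^sub>R axis i 1)) 0 \<le> max ((\<lambda>t. f (q + t *\<^sub>R axis i 1)) (lo - q$i)) ((\<lambda>t. f (q + t *\<^sub>R axis i 1)) (hi - q$i))"
    by (rule conv_max[OF coord_conv[OF assms(1)]]) (use assms in auto)
  then show ?thesis by (simp add: upd_eq)
qed

lemma cube_bound:
  assumes f: "convex21 f"
  shows "\<exists>U. \<forall>q. (\<forall>i. \<bar>q$i - p$i\<bar> \<le> 2) \<longrightarrow> f q \<le> U"
proof -
  define lo where "lo i = p$i - 2" for i
  define hi where "hi i = p$i + 2" for i
  define C where "C = (\<lambda>(a,b,c). upd (upd (upd p 1 a) 2 b) 3 c) ` ({lo 1, hi 1} \<times> {lo 2, hi 2} \<times> {lo 3, hi 3})"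
  define U where "U = Max (f ` C)"
  have finC: "finite C" unfolding C_def by auto
  have S0: "f x \<le> U" if "x$1 \<in> {lo 1, hi 1}" "x$2 \<in> {lo 2, hi 2}" "x$3 \<in> {lo 3, hi 3}" for x
  proof -
    have "x = upd (upd (upd p 1 (x$1)) 2 (x$2)) 3 (x$3)"
      by (simp add: vec_eq_iff forall_3)
    then have "x \<in> C" unfolding C_def using that by (auto intro!: image_eqI[where x="(x$1, x$2, x$3)"])
    then show ?thesis unfolding U_def using finC by (auto intro: Max_ge)
  qed
  have S1: "f x \<le> U" if "lo 1 \<le> x$1" "x$1 \<le> hi 1" "x$2 \<in> {lo 2, hi 2}" "x$3 \<in> {lo 3, hi 3}" for x
    using coord_max[OF f that(1,2)] S0[of "upd x 1 (lo 1)"] S0[of "upd x 1 (hi 1)"] that by auto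
  have S2: "f x \<le> U" if "lo 1 \<le> x$1" "x$1 \<le> hi 1" "lo 2 \<le> x$2" "x$2 \<le> hi 2" "x$3 \<in> {lo 3, hi 3}" for x
    using coord_max[OF f that(3,4)] S1[of "upd x 2 (lo 2)"] S1[of "upd x 2 (hi 2)"] that by auto
  have S3: "f x \<le> U" if "lo 1 \<le> x$1" "x$1 \<le> hi 1" "lo 2 \<le> x$2" "x$2 \<le> hi 2" "lo 3 \<le> x$3" "x$3 \<le> hi 3" for x
    using coord_max[OF f that(5,6)] S2[of "upd x 3 (lo 3)"] S2[of "upd x 3 (hi 3)"] that by auto
  show ?thesis
  proof (intro exI allI impI)
    fix q assume "\<forall>i. \<bar>q$i - p$i\<bar> \<le> 2"
    then show "f q \<le> U" by (intro S3) (auto simp: lo_def hi_def abs_le_iff dest: spec[of _ 1] spec[of _ 2] spec[of _ 3])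
  qed
qed

lemma step_lip:
  assumes f: "convex21 f" and U: "\<forall>q. (\<forall>i. \<bar>q$i - p$i\<bar> \<le> 2) \<longrightarrow> f q \<le> U"
    and r: "\<forall>j. \<bar>r$j - p$j\<bar> \<le> 1" and s: "\<bar>s\<bar> \<le> 1"
  shows "\<bar>f (upd r i (r$i + s)) - f r\<bar> \<le> \<bar>s\<bar> * (U - f r)"
proof -
  have "\<bar>(\<lambda>t. f (r + t *\<^sub>R axis i 1)) s - (\<lambda>t. f (r + t *\<^sub>R axis i 1)) 0\<bar> \<le> \<bar>s\<bar> * (U - (\<lambda>t. f (r + t *\<^sub>R axis i 1)) 0)"
  proof (rule conv_lip[OF coord_conv[OF f] _ s])
    fix t :: real assume t: "\<bar>t\<bar> \<le> 1"
    have "\<bar>(r + t *\<^sub>R axis i 1)$j - p$j\<bar> \<le> 2" for j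
    proof -
      have "\<bar>(r + t *\<^sub>R axis i 1)$j - p$j\<bar> \<le> \<bar>r$j - p$j\<bar> + \<bar>t\<bar>"
        by (cases "j = i") (auto simp: axis_def)
      moreover have "\<bar>r$j - p$j\<bar> \<le> 1" using r by blast
      ultimately show ?thesis using t by linarith
    qed
    then show "f (r + t *\<^sub>R axis i 1) \<le> U" using U by blast
  qed
  then show ?thesis by (simp add: upd_eq)
qed

lemma convex21_cont:
  assumes f: "convex21 f"
  shows "isCont f p"
proof -
  obtain U where U: "\<forall>q. (\<forall>i. \<bar>q$i - p$i\<bar> \<le> 2) \<longrightarrow> f q \<le> U"
    using cube_bound[OF f] by blast
  define D where "D = U - f p"
  have D0: "0 \<le> D" using U by (auto simp: D_def)
  have main: "\<bar>f q - f p\<bar> \<le> 7 * d * D" if q: "\<forall>j. \<bar>q$j - p$j\<bar> \<le> d" and d: "d \<le> 1" for q d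
  proof -
    have d0: "0 \<le> d" using q by (meson abs_ge_zero order_trans)
    define r1 where "r1 = upd p 1 (p$1 + (q$1 - p$1))"
    define r2 where "r2 = upd r1 2 (r1$2 + (q$2 - r1$2))"
    have q3: "q = upd r2 3 (r2$3 + (q$3 - r2$3))"
      by (simp add: r1_def r2_def vec_eq_iff forall_3)
    have qi: "\<bar>q$i - p$i\<bar> \<le> d" for i using q by blast
    have p1: "\<forall>j. \<bar>p$j - p$j\<bar> \<le> 1" by simp
    have r1c: "\<forall>j. \<bar>r1$j - p$j\<bar> \<le> 1" using qi d by (auto simp: r1_def intro: order_trans)
    have r2c: "\<forall>j. \<bar>r2$j - p$j\<bar> \<le> 1" using qi d by (auto simp: r1_def r2_def intro: order_trans)
    have r2_2: "r2$3 = p$3" "r1$2 = p$2" by (auto simp: r1_def r2_def)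
    have s1: "\<bar>q$1 - p$1\<bar> \<le> 1" "\<bar>q$2 - p$2\<bar> \<le> 1" "\<bar>q$3 - p$3\<bar> \<le> 1" using qi d by (auto intro: order_trans)
    have a1: "\<bar>f r1 - f p\<bar> \<le> \<bar>q$1 - p$1\<bar> * D"
      unfolding r1_def D_def by (rule step_lip[OF f U p1 s1(1)])
    have Dp: "f p = U - D" by (simp add: D_def)
    have a2: "\<bar>f r2 - f r1\<bar> \<le> \<bar>q$2 - p$2\<bar> * (U - f r1)"
      unfolding r2_def using step_lip[OF f U r1c, of "q$2 - r1$2" 2] r2_2 s1 by simp
    have a3: "\<bar>f q - f r2\<bar> \<le> \<bar>q$3 - p$3\<bar> * (U - f r2)"
      using step_lip[OF f U r2c, of "q$3 - r2$3" 3] r2_2 s1 q3 by simp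
    have U1: "0 \<le> U - f r1" using U r1c by (smt (verit))
    have U2: "0 \<le> U - f r2" using U r2c by (smt (verit))
    have b1: "\<bar>q$1 - p$1\<bar> * D \<le> d * D" using qi D0 d0 by (intro mult_mono) auto
    have dD: "d * D \<le> D" using d D0 mult_right_mono[of d 1 D] by simp
    have e1: "U - f r1 \<le> 2 * D" using a1 b1 dD Dp unfolding abs_le_iff by linarith
    have b2: "\<bar>q$2 - p$2\<bar> * (U - f r1) \<le> d * (2 * D)" using qi U1 e1 d0 by (intro mult_mono) auto
    have e2: "U - f r2 \<le> 4 * D" using a2 b2 dD e1 Dp unfolding abs_le_iff by linarith
    have b3: "\<bar>q$3 - p$3\<bar> * (U - f r2) \<le> d * (4 * D)" using qi U2 e2 d0 by (intro mult_mono) auto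
    show ?thesis using a1 a2 a3 b1 b2 b3 dD Dp unfolding abs_le_iff by linarith
  qed
  show ?thesis unfolding continuous_at_eps_delta
  proof (intro allI impI)
    fix e :: real assume e: "e > 0"
    define del where "del = min 1 (e / (7 * (D + 1)))"
    have del0: "del > 0" using e D0 by (simp add: del_def)
    show "\<exists>d>0. \<forall>x'. dist x' p < d \<longrightarrow> dist (f x') (f p) < e"
    proof (intro exI conjI allI impI)
      show "del > 0" by fact
      fix x' assume dx: "dist x' p < del"
      have c: "\<forall>j. \<bar>x'$j - p$j\<bar> \<le> dist x' p"
        by (metis component_le_norm_cart dist_norm vector_minus_component)
      have "\<bar>f x' - f p\<bar> \<le> 7 * dist x' p * D" using main[OF c] dx by (simp add: del_def)
      also have "\<dots> \<le> 7 * dist x' p * (D + 1)" by (intro mult_left_mono) auto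
      also have "\<dots> < 7 * del * (D + 1)" using dx D0 by simp
      also have "\<dots> \<le> 7 * (e / (7 * (D + 1))) * (D + 1)"
        using D0 by (intro mult_right_mono) (auto simp: del_def)
      also have "\<dots> = e" using D0 by (simp add: field_simps)
      finally show "dist (f x') (f p) < e" by (simp add: dist_real_def)
    qed
  qed
qed


lemma complex_element_bounded:
  assumes "complex_element L E" shows "bounded E"
proof -
  have fb: "bounded (rel_interior (convex hull S))" if "finite S" for S :: "pt3 set"
    using bounded_subset[OF finite_imp_bounded_convex_hull[OF that] rel_interior_subset] .
  show ?thesis using assms unfolding complex_element_def low_element_def
    by (elim disjE exE conjE) (auto intro: fb bounded_open_segment)
qed

lemma complex21_compact:
  assumes "complex21 A" shows "compact A"
proof -
  obtain L where L: "finite L" "A = \<Union>L" "\<forall>E\<in>L. complex_element L E" "closed A"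
    using assms unfolding complex21_def by blast
  have "bounded A" unfolding L(2) using L(1,3) complex_element_bounded by (auto intro!: bounded_Union)
  then show ?thesis using L(4) by (simp add: compact_eq_bounded_closed)
qed

lemma midpoint_max:
  fixes \<phi> :: "real \<Rightarrow> real"
  assumes c: "convex_on UNIV \<phi>" and "\<phi> (u + h) \<le> M" "\<phi> (u - h) \<le> M" "\<phi> u = M"
  shows "\<phi> (u + h) = M \<and> \<phi> (u - h) = M"
proof -
  have "\<phi> ((1 - 1/2) *\<^sub>R (u + h) + (1/2) *\<^sub>R (u - h)) \<le> (1 - 1/2) * \<phi> (u + h) + (1/2) * \<phi> (u - h)"
    by (rule convex_onD[OF c]) auto
  moreover have "(1 - 1/2) *\<^sub>R (u + h) + (1/2) *\<^sub>R (u - h) = u" by (simp add: field_simps)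
  ultimately show ?thesis using assms by auto
qed

theorem lemma2p4:
  fixes A :: "(real ^ 3) set"
  assumes "complex21 A"
  shows "A \<subseteq> rc_hull (Extr A)"
proof
  fix x assume xA: "x \<in> A"
  have cA: "compact A" using complex21_compact[OF assms] .
  show "x \<in> rc_hull (Extr A)" unfolding rc_hull_def
  proof (intro CollectI allI impI)
    fix f :: "pt3 \<Rightarrow> real" and c
    assume f: "convex21 f" and c: "\<forall>y\<in>Extr A. f y \<le> c"
    have cont: "continuous_on S f" for S
      using convex21_cont[OF f] by (simp add: continuous_at_imp_continuous_on)
    obtain m where m: "m \<in> A" "\<forall>y\<in>A. f y \<le> f m"
      using continuous_attains_sup[OF cA _ cont] xA by blast
    define K where "K = A \<inter> {y. f m \<le> f y}"
    have cK: "compact K" unfolding K_def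
      by (intro compact_Int_closed cA closed_Collect_le continuous_intros cont)
    have ccomp: "continuous_on S (\<lambda>y::pt3. y$i)" for S i
      by (intro continuous_on_component continuous_on_id)
    have mK: "m \<in> K" using m by (simp add: K_def)
    obtain e1 where e1: "e1 \<in> K" "\<forall>y\<in>K. y$1 \<le> e1$1"
      using continuous_attains_sup[OF cK, of "\<lambda>y. y$1"] mK
      using ccomp by blast
    define K1 where "K1 = K \<inter> {y. e1$1 \<le> y$1}"
    have cK1: "compact K1" unfolding K1_def
      by (intro compact_Int_closed cK closed_Collect_le continuous_intros)
    obtain e2 where e2: "e2 \<in> K1" "\<forall>y\<in>K1. y$2 \<le> e2$2"
      using continuous_attains_sup[OF cK1, of "\<lambda>y. y$2"] e1
      using ccomp by (auto simp: K1_def)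
    define K2 where "K2 = K1 \<inter> {y. e2$2 \<le> y$2}"
    have cK2: "compact K2" unfolding K2_def
      by (intro compact_Int_closed cK1 closed_Collect_le continuous_intros)
    obtain e where e: "e \<in> K2" "\<forall>y\<in>K2. y$3 \<le> e$3"
      using continuous_attains_sup[OF cK2, of "\<lambda>y. y$3"] e2
      using ccomp by (auto simp: K2_def)
    have eK: "e \<in> K" "e$1 = e1$1" "e$2 = e2$2" using e e1 e2 by (auto simp: K2_def K1_def intro!: antisym)
    have eExtr: "e \<in> Extr A"
    proof -
      have "False" if ab: "horiz_pair a b \<or> vert_pair a b" "open_segment a b \<subseteq> A" "e \<in> open_segment a b" for a b
      proof -
        obtain u where u: "a \<noteq> b" "0 < u" "u < 1" "e = (1 - u) *\<^sub>R a + u *\<^sub>R b"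
          using ab(3) by (auto simp: in_segment)
        define v where "v = b - a"
        define \<phi> where "\<phi> t = f (a + t *\<^sub>R v)" for t
        have "v$3 = 0 \<or> (v$1 = 0 \<and> v$2 = 0)" using ab(1) by (auto simp: v_def horiz_pair_def vert_pair_def)
        then have cphi: "convex_on UNIV \<phi>" using f unfolding convex21_def \<phi>_def by blast
        define h where "h = min u (1 - u) / 2"
        have h: "0 < h" "h < u" "u + h < 1" using u by (auto simp: h_def min_def field_simps)
        have pt: "a + t *\<^sub>R v \<in> A" if "0 < t" "t < 1" for t
        proof -
          have "a + t *\<^sub>R v = (1 - t) *\<^sub>R a + t *\<^sub>R b" by (simp add: v_def algebra_simps)
          then have "a + t *\<^sub>R v \<in> open_segment a b" using that u(1) by (auto simp: in_segment)
          then show ?thesis using ab(2) by blast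
        qed
        have ee: "e = a + u *\<^sub>R v" using u(4) by (simp add: v_def algebra_simps)
        have fe: "f e = f m" using eK m by (auto simp: K_def intro: antisym)
        have "\<phi> (u + h) = f m \<and> \<phi> (u - h) = f m"
          by (rule midpoint_max[OF cphi]) (use pt h m fe ee in \<open>auto simp: \<phi>_def\<close>)
        moreover have "a + (u + h) *\<^sub>R v = e + h *\<^sub>R v" "a + (u - h) *\<^sub>R v = e - h *\<^sub>R v"
          by (simp_all add: ee algebra_simps)
        moreover have "e + h *\<^sub>R v \<in> A" "e - h *\<^sub>R v \<in> A"
          using pt[of "u + h"] pt[of "u - h"] h calculation(2,3) by auto
        ultimately have wK: "e + h *\<^sub>R v \<in> K" "e - h *\<^sub>R v \<in> K"
          by (auto simp: K_def \<phi>_def)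
        have "v \<noteq> 0" using u(1) by (simp add: v_def)
        then have vnz: "v$1 \<noteq> 0 \<or> v$2 \<noteq> 0 \<or> v$3 \<noteq> 0" by (auto simp: vec_eq_iff forall_3)
        show False
        proof (cases "v$1 = 0")
          case False
          have "(e + h *\<^sub>R v)$1 \<le> e$1" "(e - h *\<^sub>R v)$1 \<le> e$1" using e1(2) wK eK by auto
          then show False using False h(1)
            by (cases "v$1 > 0") (auto simp: mult_le_0_iff zero_le_mult_iff)
        next
          case v1: True
          have wK1: "e + h *\<^sub>R v \<in> K1" "e - h *\<^sub>R v \<in> K1" using wK v1 eK by (auto simp: K1_def)
          show False
          proof (cases "v$2 = 0")
            case False
            have "(e + h *\<^sub>R v)$2 \<le> e$2" "(e - h *\<^sub>R v)$2 \<le> e$2" using e2(2) wK1 eK by auto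
            then show False using False h(1)
              by (cases "v$2 > 0") (auto simp: mult_le_0_iff zero_le_mult_iff)
          next
            case v2: True
            have wK2: "e + h *\<^sub>R v \<in> K2" "e - h *\<^sub>R v \<in> K2" using wK1 v2 eK by (auto simp: K2_def)
            have "v$3 \<noteq> 0" using vnz v1 v2 by simp
            moreover have "(e + h *\<^sub>R v)$3 \<le> e$3" "(e - h *\<^sub>R v)$3 \<le> e$3" using e(2) wK2 by auto
            ultimately show False using h(1)
              by (cases "v$3 > 0") (auto simp: mult_le_0_iff zero_le_mult_iff)
          qed
        qed
      qed
      then show ?thesis using eK(1) by (auto simp: Extr_def K_def)
    qed
    have "f x \<le> f e" using m xA eK by (auto simp: K_def)
    also have "f e \<le> c" using c eExtr by blast
    finally show "f x \<le> c" .
  qed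
qed

end
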